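(* In the isotropic setting below, let $F\in\mathrm{GL}^+(3)$ be fixed and $t\mapsto C_p(t)\in\mathrm{PSym}(3)$ be differentiable. Put $F_p(t)=\sqrt{C_p(t)}$, $F_e=FF_p^{-1}$, $B_e=F_eF_e^T=FC_p^{-1}F^T$, $\tau_e=DW(F_e)F_e^T$. Then $$\frac{d}{dt}\widetilde W\big(CC_p^{-1}(t)\big)=\frac12\Big\langle\tau_e,\;F\,\frac{d}{dt}[C_p^{-1}]\,F^T B_e^{-1}\Big\rangle.$$ If moreover at time $t$ one has $\mathrm{dev}_3\tau_e\neq0$ and the Simo–Miehe flow rule $\frac{d}{dt}[C_p^{-1}]=-2\lambda\,F^{-1}\big[\frac{\mathrm{dev}_3\tau_e}{\|\mathrm{dev}_3\tau_e\|}B_e\big]F^{-T}$ with $\lambda\ge0$, then $$\frac{d}{dt}\widetilde W\big(CC_p^{-1}(t)\big)=-\lambda\,\|\mathrm{dev}_3\tau_e\|\le0.$$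
   Context: $W:\mathrm{GL}^+(3)\to\mathbb{R}$ objective and isotropic ($W(QFR)=W(F)$, $Q,R\in\mathrm{SO}(3)$), written $W(F_e)=\Psi(I_1(C_e),I_2(C_e),I_3(C_e))$ with $\Psi\in C^1$, $C_e=F_e^TF_e$; $\widetilde W(X)=\Psi(\mathrm{tr}X,\mathrm{tr}(\mathrm{Cof}X),\det X)$, so that $W(F_e)=\widetilde W(CC_p^{-1})$ with $C=F^TF$. $\langle X,Y\rangle=\mathrm{tr}(XY^T)$, $\|\cdot\|$ Frobenius norm, $DW$ gradient, $\mathrm{dev}_3X=X-\frac13\mathrm{tr}(X)\mathbb{1}$. For isotropic $W$, $\tau_e$ is symmetric and commutes with $B_e$. *)

theory Defs
  imports "HOL-Analysis.Analysis"
begin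

type_synonym mat3 = "real^3^3"

text \<open>Cofactor matrix: entry (i,j) is the determinant of X with row i replaced by the j-th unit row
  (Laplace expansion), i.e. (-1)^(i+j) times the (i,j) minor.\<close>
definition Cof :: "mat3 \<Rightarrow> mat3" where
  "Cof X = (\<chi> i j. det (\<chi> k l. if k = i then (if l = j then 1 else 0) else X $ k $ l))"

definition psym :: "mat3 \<Rightarrow> bool" where
  "psym M \<longleftrightarrow> transpose M = M \<and> (\<forall>x::real^3. x \<noteq> 0 \<longrightarrow> x \<bullet> (M *v x) > 0)"

definition msqrt :: "mat3 \<Rightarrow> mat3" where
  "msqrt C = (THE S. psym S \<and> S ** S = C)"

text \<open>Gradient w.r.t. the Frobenius inner product (the inner product on real^3^3 is tr(X Y^T)).\<close>
definition grad :: "(mat3 \<Rightarrow> real) \<Rightarrow> mat3 \<Rightarrow> mat3" where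
  "grad W F = (SOME G. (W has_derivative (\<lambda>H. G \<bullet> H)) (at F))"

definition dev3 :: "mat3 \<Rightarrow> mat3" where
  "dev3 X = X - (trace X / 3) *\<^sub>R mat 1"

definition invariants :: "mat3 \<Rightarrow> real^3" where
  "invariants X = vector [trace X, trace (Cof X), det X]"

definition Wtilde :: "(real^3 \<Rightarrow> real) \<Rightarrow> mat3 \<Rightarrow> real" where
  "Wtilde \<Psi> X = \<Psi> (invariants X)"

end

theory Submission
  imports Defs
begin

lemma trace_Cof: "trace (Cof X) = ((trace X)^2 - trace (X ** X)) / 2"
  unfolding Cof_def trace_def
  by (simp add: sum_3 det_3 matrix_matrix_mult_def power2_eq_square algebra_simps)

lemma invariants_comm: "invariants (A ** B) = invariants (B ** A)"
proof -
  have "trace ((A ** B) ** (A ** B)) = trace ((B ** A) ** (B ** A))"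
    by (metis matrix_mul_assoc trace_mul_sym)
  then show ?thesis
    unfolding invariants_def by (simp add: trace_Cof trace_mul_sym[of A B] det_mul mult.commute)
qed

lemma inv_lr:
  fixes A :: "real^'n^'n"
  assumes "det A \<noteq> 0"
  shows "A ** matrix_inv A = mat 1" "matrix_inv A ** A = mat 1"
proof -
  have "invertible A" using assms invertible_det_nz by blast
  then have "\<exists>A'. A ** A' = mat 1 \<and> A' ** A = mat 1" unfolding invertible_def by blast
  from someI_ex[OF this] show "A ** matrix_inv A = mat 1" "matrix_inv A ** A = mat 1"
    unfolding matrix_inv_def by auto
qed

lemma inv_unique:
  fixes A B :: "real^'n^'n"
  assumes "A ** B = mat 1"
  shows "matrix_inv A = B"
proof -
  have "det A * det B = 1" using assms by (metis det_I det_mul)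
  then have "det A \<noteq> 0" by auto
  then have "matrix_inv A = matrix_inv A ** (A ** B)" using assms by simp
  also have "\<dots> = B" using inv_lr[OF \<open>det A \<noteq> 0\<close>] by (simp add: matrix_mul_assoc)
  finally show ?thesis .
qed

lemma inv_transpose:
  fixes A :: "real^'n^'n"
  assumes "det A \<noteq> 0"
  shows "matrix_inv (transpose A) = transpose (matrix_inv A)"
  by (rule inv_unique) (metis assms inv_lr(2) matrix_transpose_mul transpose_mat)


lemma inner_mat_move:
  fixes A B M :: "real^'n^'n"
  shows "(A ** transpose B) \<bullet> M = A \<bullet> (M ** B)"
proof -
  have "(A ** transpose B) \<bullet> M = (\<Sum>i\<in>UNIV. \<Sum>k\<in>UNIV. \<Sum>j\<in>UNIV. A$i$j * B$k$j * M$i$k)"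
    unfolding inner_vec_def matrix_matrix_mult_def transpose_def
    by (simp add: sum_distrib_right)
  also have "\<dots> = (\<Sum>i\<in>UNIV. \<Sum>j\<in>UNIV. \<Sum>k\<in>UNIV. A$i$j * B$k$j * M$i$k)"
    by (rule sum.cong[OF refl], rule sum.swap)
  also have "\<dots> = A \<bullet> (M ** B)"
    unfolding inner_vec_def matrix_matrix_mult_def transpose_def
    by (simp add: sum_distrib_left mult_ac)
  finally show ?thesis .
qed


lemma sym_dot:
  fixes A :: "real^'n^'n"
  assumes "transpose A = A"
  shows "x \<bullet> (A *v y) = (A *v x) \<bullet> y"
  by (metis assms dot_lmul_matrix transpose_matrix_vector)

lemma aux_q: fixes c q :: real assumes "q \<noteq> 0"
  shows "2*(-c/q)*c + (-c/q)^2*(q-1) = -(c^2*(q+1))/q^2"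
  using assms by (simp add: field_simps power2_eq_square)

lemma eig_exists:
  fixes A :: "real^'n^'n" and U :: "(real^'n) set"
  assumes sym: "transpose A = A" and sub: "subspace U" and inv: "\<And>x. x \<in> U \<Longrightarrow> A *v x \<in> U"
    and ne: "z \<in> U" "z \<noteq> 0"
  shows "\<exists>x\<in>U. norm x = 1 \<and> A *v x = (x \<bullet> (A *v x)) *\<^sub>R x"
proof -
  define f where "f = (\<lambda>x::real^'n. x \<bullet> (A *v x))"
  define K where "K = U \<inter> sphere 0 1"
  have "compact K" unfolding K_def
    by (metis Int_commute closed_subspace compact_Int_closed compact_sphere sub)
  moreover have "K \<noteq> {}"
  proof -
    have "(1/norm z) *\<^sub>R z \<in> K" using ne sub unfolding K_def
      by (simp add: subspace_scale)
    then show ?thesis by blast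
  qed
  moreover have "continuous_on K f" unfolding f_def
    by (intro continuous_intros linear_continuous_on matrix_vector_mul_linear)
  ultimately obtain x0 where x0: "x0 \<in> K" "\<And>y. y \<in> K \<Longrightarrow> f y \<le> f x0"
    using continuous_attains_sup by metis
  define \<mu> where "\<mu> = f x0"
  have x0U: "x0 \<in> U" and nx0: "norm x0 = 1" using x0(1) unfolding K_def by auto
  have bound: "f v \<le> \<mu> * (v \<bullet> v)" if "v \<in> U" for v
  proof (cases "v = 0")
    case True then show ?thesis by (simp add: f_def)
  next
    case False
    let ?w = "(1/norm v) *\<^sub>R v"
    have "?w \<in> K" using False that sub unfolding K_def by (simp add: subspace_scale)
    then have "f ?w \<le> \<mu>" using x0 \<mu>_def by blast
    moreover have "f ?w = f v / (norm v)^2"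
      unfolding f_def by (simp add: matrix_vector_mult_scaleR power2_eq_square)
    moreover have "v \<bullet> v = (norm v)^2" by (simp add: power2_norm_eq_inner)
    moreover have "(norm v)^2 > 0" using False by simp
    ultimately show ?thesis by (simp add: divide_le_eq mult.commute)
  qed
  define y where "y = \<mu> *\<^sub>R x0 - A *v x0"
  have yU: "y \<in> U" unfolding y_def using x0U inv sub by (simp add: subspace_diff subspace_scale)
  define c where "c = y \<bullet> y"
  define d where "d = \<mu> * (y \<bullet> y) - f y"
  have d0: "d \<ge> 0" using bound[OF yU] unfolding d_def by simp
  have key: "0 \<le> 2*e*c + e^2*d" for e
  proof -
    have vU: "x0 + e *\<^sub>R y \<in> U" using x0U yU sub by (simp add: subspace_add subspace_scale)
    have e1: "f (x0 + e *\<^sub>R y) = \<mu> + 2*e*(y \<bullet> (A *v x0)) + e^2 * f y"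
      unfolding f_def \<mu>_def
      using sym_dot[OF sym, of x0 y]
      by (simp add: matrix_vector_right_distrib matrix_vector_mult_scaleR inner_add_left inner_add_right
          power2_eq_square algebra_simps inner_commute)
    have e2: "(x0 + e *\<^sub>R y) \<bullet> (x0 + e *\<^sub>R y) = 1 + 2*e*(x0 \<bullet> y) + e^2 * (y \<bullet> y)"
      using nx0 by (simp add: inner_add_left inner_add_right power2_eq_square algebra_simps
          inner_commute norm_eq_sqrt_inner)
    have ceq: "c = \<mu> * (x0 \<bullet> y) - y \<bullet> (A *v x0)" unfolding c_def y_def
      using sym_dot[OF sym, of x0 y]
      by (simp add: inner_diff_left inner_diff_right inner_commute algebra_simps)
    have eq: "2*e*c + e^2*d = \<mu>*(1 + 2*e*(x0 \<bullet> y) + e^2*(y \<bullet> y)) - (\<mu> + 2*e*(y \<bullet> (A *v x0)) + e^2 * f y)"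
      unfolding d_def ceq by (simp add: algebra_simps)
    have "\<mu> + 2*e*(y \<bullet> (A *v x0)) + e^2 * f y \<le> \<mu>*(1 + 2*e*(x0 \<bullet> y) + e^2*(y \<bullet> y))"
      using bound[OF vU] unfolding e1 e2 .
    then show ?thesis using eq by linarith
  qed
  have "c = 0"
  proof (rule ccontr)
    assume "c \<noteq> 0"
    have d1: "d + 1 > 0" using d0 by simp
    have "0 \<le> 2*(-c/(d+1))*c + (-c/(d+1))^2*((d+1)-1)" using key[of "-c/(d+1)"] by simp
    also have "\<dots> = - (c^2 * ((d+1)+1)) / (d+1)^2"
      by (rule aux_q) (use d1 in simp)
    also have "\<dots> < 0" using d1 d0 \<open>c \<noteq> 0\<close> by (simp add: divide_neg_pos)
    finally show False by simp
  qed
  then have "y = 0" unfolding c_def by simp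
  then have "A *v x0 = \<mu> *\<^sub>R x0" unfolding y_def by simp
  moreover have "\<mu> = x0 \<bullet> (A *v x0)" unfolding \<mu>_def f_def ..
  ultimately show ?thesis using x0U nx0 by auto
qed


definition diagm :: "(3 \<Rightarrow> real) \<Rightarrow> real^3^3" where
  "diagm m = (\<chi> i j. if i = j then m i else 0)"

lemma spectral3:
  fixes A :: "real^3^3"
  assumes sym: "transpose A = A"
  shows "\<exists>V m. transpose V ** V = mat 1 \<and> V ** transpose V = mat 1 \<and> A = V ** diagm m ** transpose V
     \<and> (\<forall>j. m j = (\<chi> i. V$i$j) \<bullet> (A *v (\<chi> i. V$i$j)))"
proof -
  have sub1: "subspace (UNIV :: (real^3) set)" by simp
  obtain e1 where e1: "norm e1 = 1" "A *v e1 = (e1 \<bullet> (A *v e1)) *\<^sub>R e1"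
    using eig_exists[OF sym sub1, of "axis 1 1"] by (auto simp: axis_eq_0_iff)
  define U2 where "U2 = {v::real^3. v \<bullet> e1 = 0}"
  have sub2: "subspace U2" unfolding U2_def subspace_def by (auto simp: inner_add_left)
  have inv2: "A *v x \<in> U2" if "x \<in> U2" for x
  proof -
    have x: "x \<bullet> e1 = 0" using that unfolding U2_def by simp
    have "x \<bullet> (A *v e1) = 0" by (subst e1(2)) (simp add: x)
    then show ?thesis using sym_dot[OF sym, of x e1] unfolding U2_def by (simp add: inner_commute)
  qed
  have dimA: "dim {e1} < DIM(real^3)" by (simp add: dim_singleton)
  then obtain z2 where z2: "z2 \<noteq> 0" "\<And>y. y \<in> span {e1} \<Longrightarrow> orthogonal z2 y"
    using orthogonal_to_subspace_exists[OF dimA] by blast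
  have "z2 \<in> U2" using z2(2)[of e1] unfolding U2_def orthogonal_def by (simp add: span_base)
  then obtain e2 where e2: "e2 \<in> U2" "norm e2 = 1" "A *v e2 = (e2 \<bullet> (A *v e2)) *\<^sub>R e2"
    using eig_exists[OF sym sub2 inv2 _ z2(1)] by blast
  define U3 where "U3 = {v::real^3. v \<bullet> e1 = 0 \<and> v \<bullet> e2 = 0}"
  have sub3: "subspace U3" unfolding U3_def subspace_def by (auto simp: inner_add_left)
  have inv3: "A *v x \<in> U3" if "x \<in> U3" for x
  proof -
    have x: "x \<bullet> e1 = 0" "x \<bullet> e2 = 0" using that unfolding U3_def by auto
    have "x \<bullet> (A *v e1) = 0" by (subst e1(2)) (simp add: x)
    moreover have "x \<bullet> (A *v e2) = 0" by (subst e2(3)) (simp add: x)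
    ultimately show ?thesis using sym_dot[OF sym, of x e1] sym_dot[OF sym, of x e2]
      unfolding U3_def by (simp add: inner_commute)
  qed
  have "dim {e1, e2} \<le> card {e1,e2}" by (rule dim_le_card') auto
  also have "\<dots> \<le> 2" by (simp add: card_insert_le_m1)
  finally have dimB: "dim {e1, e2} < DIM(real^3)" by simp
  then obtain z3 where z3: "z3 \<noteq> 0" "\<And>y. y \<in> span {e1,e2} \<Longrightarrow> orthogonal z3 y"
    using orthogonal_to_subspace_exists[OF dimB] by blast
  have "e1 \<in> span {e1,e2}" "e2 \<in> span {e1,e2}" by (auto intro: span_base)
  then have "z3 \<in> U3" using z3(2)[of e1] z3(2)[of e2] unfolding U3_def orthogonal_def by (auto simp: span_base inner_commute)
  then obtain e3 where e3: "e3 \<in> U3" "norm e3 = 1" "A *v e3 = (e3 \<bullet> (A *v e3)) *\<^sub>R e3"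
    using eig_exists[OF sym sub3 inv3 _ z3(1)] by blast
  define e where "e j = (if j = 1 then e1 else if j = 2 then e2 else e3)" for j :: 3
  have n1: "e1 \<bullet> e1 = 1" "e2 \<bullet> e2 = 1" "e3 \<bullet> e3 = 1" using e1 e2 e3
    by (simp_all add: norm_eq_sqrt_inner)
  have o: "e2 \<bullet> e1 = 0" "e3 \<bullet> e1 = 0" "e3 \<bullet> e2 = 0" using e2(1) e3(1) unfolding U2_def U3_def by auto
  have o': "e1 \<bullet> e2 = 0" "e1 \<bullet> e3 = 0" "e2 \<bullet> e3 = 0" using o by (simp_all add: inner_commute)
  have orth: "e j \<bullet> e k = (if j = k then 1 else 0)" for j k
  proof -
    have "j = 1 \<or> j = 2 \<or> j = 3" "k = 1 \<or> k = 2 \<or> k = 3" using exhaust_3 by auto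
    then show ?thesis unfolding e_def using n1 o o' by (elim disjE) simp_all
  qed
  have eig: "A *v e j = (e j \<bullet> (A *v e j)) *\<^sub>R e j" for j
  proof -
    have "j = 1 \<or> j = 2 \<or> j = 3" using exhaust_3 by auto
    then show ?thesis
    proof (elim disjE)
      assume "j = 1" then have "e j = e1" by (simp add: e_def)
      then show ?thesis using e1(2) by metis
    next
      assume "j = 2" then have "e j = e2" by (simp add: e_def)
      then show ?thesis using e2(3) by metis
    next
      assume "j = 3" then have "e j = e3" by (simp add: e_def)
      then show ?thesis using e3(3) by metis
    qed
  qed
  define V where "V = (\<chi> i j. e j $ i)"
  define m where "m j = e j \<bullet> (A *v e j)" for j
  have col: "(\<chi> i. V$i$j) = e j" for j unfolding V_def by (simp add: vec_eq_iff)
  have VV: "transpose V ** V = mat 1"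
  proof -
    have "(transpose V ** V)$j$k = (if j = k then 1 else 0)" for j k
    proof -
      have "(transpose V ** V)$j$k = e j \<bullet> e k"
        unfolding V_def matrix_matrix_mult_def transpose_def inner_vec_def by simp
      then show ?thesis using orth by simp
    qed
    then show ?thesis by (simp add: vec_eq_iff mat_def)
  qed
  then have VV2: "V ** transpose V = mat 1"
    by (metis orthogonal_matrix orthogonal_matrix_def)
  have AV: "A ** V = V ** diagm m"
  proof -
    have "(A ** V)$i$j = (V ** diagm m)$i$j" for i j
    proof -
      have "(A ** V)$i$j = (A *v e j)$i" unfolding V_def matrix_matrix_mult_def matrix_vector_mult_def by simp
      also have "\<dots> = m j * e j $ i" by (subst eig) (simp add: m_def)
      also have "\<dots> = (\<Sum>k\<in>UNIV. if k = j then e k $ i * m k else 0)" by simp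
      also have "\<dots> = (\<Sum>k\<in>UNIV. e k $ i * (if k = j then m k else 0))"
        by (rule sum.cong) auto
      also have "\<dots> = (V ** diagm m)$i$j" unfolding V_def diagm_def matrix_matrix_mult_def
        by simp
      finally show ?thesis .
    qed
    then show ?thesis by (simp add: vec_eq_iff)
  qed
  have "A = A ** (V ** transpose V)" using VV2 by simp
  also have "\<dots> = V ** diagm m ** transpose V" using AV by (simp add: matrix_mul_assoc)
  finally have "A = V ** diagm m ** transpose V" .
  then show ?thesis using VV VV2 col
    by (intro exI[of _ V] exI[of _ m]) (simp add: m_def)
qed


lemma diagm_mult: "diagm a ** diagm b = diagm (\<lambda>i. a i * b i)"
proof -
  have "(\<Sum>k\<in>UNIV. (if i = k then a i else 0) * (if k = j then b k else 0)) = (if i = j then a i * b i else 0)" for i j :: 3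
  proof -
    have "(\<Sum>k\<in>UNIV. (if i = k then a i else 0) * (if k = j then b k else 0)) = (\<Sum>k\<in>UNIV. if k = i then (if k = j then a i * b k else 0) else 0)"
      by (rule sum.cong) auto
    then show ?thesis by simp
  qed
  then show ?thesis unfolding diagm_def matrix_matrix_mult_def by (simp add: vec_eq_iff)
qed

lemma diagm_transpose: "transpose (diagm a) = diagm a"
  unfolding diagm_def transpose_def by (simp add: vec_eq_iff)

lemma det_diagm: "det (diagm a) = a 1 * a 2 * a 3"
  unfolding diagm_def by (simp add: det_3)

lemma trace_diagm: "trace (diagm a) = a 1 + a 2 + a 3"
  unfolding diagm_def trace_def by (simp add: sum_3)

lemma diagm_quad: "y \<bullet> (diagm a *v y) = (\<Sum>i\<in>UNIV. a i * (y$i)^2)"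
proof -
  have "(\<Sum>j\<in>UNIV. y $ j * (if i = j then a i else 0)) = y$i * a i" for i
  proof -
    have "(\<Sum>j\<in>UNIV. y $ j * (if i = j then a i else 0)) = (\<Sum>j\<in>UNIV. if j = i then y $ j * a i else 0)"
      by (rule sum.cong) auto
    then show ?thesis by simp
  qed
  then show ?thesis unfolding diagm_def matrix_vector_mult_def inner_vec_def
    by (simp add: power2_eq_square mult_ac)
qed

lemma quad_conj:
  fixes B M :: "real^'n^'n"
  shows "x \<bullet> ((B ** M ** transpose B) *v x) = (transpose B *v x) \<bullet> (M *v (transpose B *v x))"
  by (metis dot_lmul_matrix matrix_vector_mul_assoc transpose_matrix_vector)

lemma col_norm:
  fixes V :: "real^3^3"
  assumes "transpose V ** V = mat 1"
  shows "(\<chi> i. V$i$j) \<bullet> (\<chi> i. V$i$j) = 1"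
proof -
  have "(transpose V ** V)$j$j = 1" using assms by (simp add: mat_def)
  then show ?thesis unfolding matrix_matrix_mult_def transpose_def inner_vec_def by simp
qed

lemma spectral3_pos:
  fixes A :: "real^3^3"
  assumes "psym A"
  shows "\<exists>V m. transpose V ** V = mat 1 \<and> V ** transpose V = mat 1 \<and> A = V ** diagm m ** transpose V
     \<and> (\<forall>j. m j > 0)"
proof -
  have sym: "transpose A = A" using assms unfolding psym_def by simp
  obtain V m where Vm: "transpose V ** V = mat 1" "V ** transpose V = mat 1" "A = V ** diagm m ** transpose V"
     "\<And>j. m j = (\<chi> i. V$i$j) \<bullet> (A *v (\<chi> i. V$i$j))"
    using spectral3[OF sym] by blast
  have "m j > 0" for j
  proof -
    have "(\<chi> i. V$i$j) \<noteq> 0" using col_norm[OF Vm(1), of j] by auto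
    then show ?thesis using assms Vm(4)[of j] unfolding psym_def by auto
  qed
  then show ?thesis using Vm by blast
qed

lemma orth_nz:
  fixes V :: "real^3^3"
  assumes "V ** transpose V = mat 1" "x \<noteq> 0"
  shows "transpose V *v x \<noteq> 0"
proof
  assume "transpose V *v x = 0"
  then have "V *v (transpose V *v x) = 0" by simp
  then show False using assms by (metis matrix_vector_mul_assoc matrix_vector_mul_lid)
qed


lemma sqrt_exists:
  fixes A :: "real^3^3"
  assumes "psym A"
  shows "\<exists>S. psym S \<and> S ** S = A \<and> det S > 0"
proof -
  obtain V m where Vm: "transpose V ** V = mat 1" "V ** transpose V = mat 1" "A = V ** diagm m ** transpose V"
     "\<And>j. m j > 0"
    using spectral3_pos[OF assms] by blast
  define r where "r j = sqrt (m j)" for j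
  define S where "S = V ** diagm r ** transpose V"
  have "S ** S = V ** (diagm r ** (transpose V ** V) ** diagm r) ** transpose V"
    unfolding S_def by (simp add: matrix_mul_assoc)
  also have "\<dots> = V ** diagm m ** transpose V" using Vm(1) Vm(4)[THEN less_imp_le]
    by (simp add: diagm_mult r_def)
  finally have SS: "S ** S = A" using Vm(3) by simp
  have symS: "transpose S = S" unfolding S_def
    by (simp add: matrix_transpose_mul diagm_transpose matrix_mul_assoc)
  have pd: "x \<bullet> (S *v x) > 0" if "x \<noteq> 0" for x
  proof -
    let ?y = "transpose V *v x"
    have "?y \<noteq> 0" using orth_nz[OF Vm(2) that] .
    then obtain i where i: "?y $ i \<noteq> 0" by (auto simp: vec_eq_iff)
    have "x \<bullet> (S *v x) = (\<Sum>j\<in>UNIV. r j * (?y$j)^2)"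
      unfolding S_def quad_conj diagm_quad ..
    also have "\<dots> > 0"
    proof (rule sum_pos2[where i=i])
      show "0 < r i * (?y$i)^2" using i Vm(4)[of i] unfolding r_def by simp
      show "\<And>j. j \<in> UNIV \<Longrightarrow> 0 \<le> r j * (?y$j)^2" using Vm(4) unfolding r_def by (simp add: less_imp_le)
    qed auto
    finally show ?thesis .
  qed
  have "det V * det V = 1" using Vm(1) by (metis det_I det_mul det_transpose)
  then have "det S = r 1 * r 2 * r 3" unfolding S_def
    by (simp add: det_mul det_diagm det_transpose)
  also have "\<dots> > 0" using Vm(4) unfolding r_def by simp
  finally show ?thesis using SS symS pd unfolding psym_def by blast
qed


lemma mat_sub_ldistrib: "(A::real^'n^'m) ** (B - C) = A ** B - A ** C"
  by (simp add: vec_eq_iff matrix_matrix_mult_def sum_subtractf algebra_simps)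

lemma mat_sub_rdistrib: "((A::real^'n^'m) - B) ** C = A ** C - B ** C"
  by (simp add: vec_eq_iff matrix_matrix_mult_def sum_subtractf algebra_simps)

lemma trace_psd_form:
  fixes X M :: "real^'n^'n"
  shows "trace (transpose X ** (M ** X)) = (\<Sum>k\<in>UNIV. (\<chi> i. X$i$k) \<bullet> (M *v (\<chi> i. X$i$k)))"
  unfolding trace_def matrix_matrix_mult_def transpose_def inner_vec_def matrix_vector_mult_def
  by simp

lemma psd_trace_zero:
  fixes X M :: "real^3^3"
  assumes "psym M"
  shows "trace (transpose X ** (M ** X)) \<ge> 0"
    and "trace (transpose X ** (M ** X)) = 0 \<Longrightarrow> X = 0"
proof -
  have nn: "(\<chi> i. X$i$k) \<bullet> (M *v (\<chi> i. X$i$k)) \<ge> 0" for k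
    using assms unfolding psym_def by (cases "(\<chi> i. X$i$k) = 0") (auto intro: less_imp_le)
  then show "trace (transpose X ** (M ** X)) \<ge> 0" unfolding trace_psd_form by (simp add: sum_nonneg)
  assume "trace (transpose X ** (M ** X)) = 0"
  then have "\<forall>k\<in>UNIV. (\<chi> i. X$i$k) \<bullet> (M *v (\<chi> i. X$i$k)) = 0"
    unfolding trace_psd_form using nn by (subst sum_nonneg_eq_0_iff[symmetric]) auto
  then have "(\<chi> i. X$i$k) = 0" for k
    using assms unfolding psym_def by (metis less_irrefl UNIV_I)
  then show "X = 0" by (simp add: vec_eq_iff)
qed

lemma sqrt_unique:
  fixes S T :: "real^3^3"
  assumes S: "psym S" and T: "psym T" and eq: "S ** S = T ** T"
  shows "S = T"
proof -
  define D where "D = S - T"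
  have symD: "transpose D = D" using S T unfolding psym_def D_def by (simp add: transpose_def vec_eq_iff)
  have "S ** D + D ** T = S ** S - T ** T" unfolding D_def mat_sub_ldistrib mat_sub_rdistrib by simp
  then have h: "S ** D + D ** T = 0" using eq by simp
  have "trace (D ** (S ** D)) + trace (D ** (D ** T)) = trace (D ** (S ** D + D ** T))"
    by (simp add: matrix_add_ldistrib trace_add)
  also have "\<dots> = 0" using h by (simp add: trace_def)
  finally have s0: "trace (transpose D ** (S ** D)) + trace (transpose D ** (T ** D)) = 0"
    using trace_mul_sym[of D "D ** T"] symD by (simp add: matrix_mul_assoc)
  have "trace (transpose D ** (S ** D)) = 0"
    using s0 psd_trace_zero(1)[OF S, of D] psd_trace_zero(1)[OF T, of D] by linarith
  then have "D = 0" using psd_trace_zero(2)[OF S] by blast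
  then show ?thesis unfolding D_def by simp
qed

lemma msqrt_props:
  fixes A :: "real^3^3"
  assumes "psym A"
  shows "psym (msqrt A)" "msqrt A ** msqrt A = A" "det (msqrt A) > 0"
proof -
  obtain S where S: "psym S" "S ** S = A" "det S > 0" using sqrt_exists[OF assms] by blast
  have "msqrt A = S" unfolding msqrt_def
    by (rule the_equality) (use S sqrt_unique in auto)
  then show "psym (msqrt A)" "msqrt A ** msqrt A = A" "det (msqrt A) > 0" using S by auto
qed


lemma invariants_comp: "invariants X $ 1 = trace X" "invariants X $ 2 = trace (Cof X)" "invariants X $ 3 = det X"
  unfolding invariants_def by simp_all

lemma invariants_pos:
  assumes "psym B"
  shows "invariants B $ i > 0"
proof -
  obtain V m where Vm: "transpose V ** V = mat 1" "V ** transpose V = mat 1" "B = V ** diagm m ** transpose V"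
     "\<And>j. m j > 0"
    using spectral3_pos[OF assms] by blast
  have "invariants B = invariants (transpose V ** (V ** diagm m))"
    using Vm(3) invariants_comm by metis
  also have "\<dots> = invariants (diagm m)" using Vm(1) by (simp add: matrix_mul_assoc)
  finally have iB: "invariants B = invariants (diagm m)" .
  have m: "m 1 > 0" "m 2 > 0" "m 3 > 0" using Vm(4) by auto
  have c2: "trace (Cof (diagm m)) = m 1 * m 2 + m 1 * m 3 + m 2 * m 3"
    unfolding trace_Cof diagm_mult trace_diagm by (simp add: power2_eq_square algebra_simps)
  have "i = 1 \<or> i = 2 \<or> i = 3" using exhaust_3 by auto
  then show ?thesis unfolding iB using m
    by (elim disjE) (simp_all add: invariants_comp trace_diagm c2 det_diagm add_pos_pos)
qed


lemma poly_vec: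
  fixes f :: "'a::real_normed_vector \<Rightarrow> 'b::euclidean_space ^'n"
  assumes "\<And>i. polynomial_function (\<lambda>x. f x $ i)"
  shows "polynomial_function f"
  unfolding polynomial_function_iff_Basis_inner
proof
  fix b :: "'b^'n" assume "b \<in> Basis"
  then obtain i u where b: "b = axis i u" "u \<in> Basis" unfolding Basis_vec_def by auto
  have "(\<lambda>x. f x \<bullet> b) = (\<lambda>x. f x $ i \<bullet> u)" unfolding b inner_axis ..
  then show "real_polynomial_function (\<lambda>x. f x \<bullet> b)"
    using polynomial_function_inner[OF assms[of i], of u]
    by (simp add: real_polynomial_function_eq)
qed

lemma poly_entry: "polynomial_function (\<lambda>X::real^'n^'m. X$i$j)"
  by (rule polynomial_function_bounded_linear)
     (rule bounded_linear_compose[OF bounded_linear_vec_nth bounded_linear_vec_nth])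

lemma poly_entry_if: "polynomial_function (\<lambda>X::real^'n^'m. if P then c else X$i$j)"
  by (cases P) (simp_all add: poly_entry)

lemma poly_det:
  fixes f :: "'a::real_normed_vector \<Rightarrow> real^'n^'n"
  assumes "\<And>i j. polynomial_function (\<lambda>x. f x $ i $ j)"
  shows "polynomial_function (\<lambda>x. det (f x))"
proof -
  have "real_polynomial_function (\<lambda>x. \<Sum>p\<in>{p. p permutes UNIV}. of_int (sign p) * (\<Prod>i\<in>UNIV. f x $ i $ p i))"
    using assms by (intro real_polynomial_function_sum real_polynomial_function_prod
        real_polynomial_function.intros(3,4) real_polynomial_function.intros(2))
       (auto simp: real_polynomial_function_eq)
  then show ?thesis unfolding det_def real_polynomial_function_eq .
qed

lemma poly_invariants: "polynomial_function invariants"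
proof (rule poly_vec)
  fix i :: 3
  have tr: "polynomial_function (\<lambda>X::real^3^3. trace X)"
    unfolding trace_def by (intro polynomial_function_sum poly_entry) auto
  have cf: "polynomial_function (\<lambda>X. trace (Cof X))"
    unfolding trace_def Cof_def
    by (intro polynomial_function_sum, simp, simp, rule poly_det, simp add: poly_entry_if)
  have dt: "polynomial_function (\<lambda>X::real^3^3. det X)"
    by (rule poly_det) (rule poly_entry)
  have "i = 1 \<or> i = 2 \<or> i = 3" using exhaust_3 by auto
  then show "polynomial_function (\<lambda>x. invariants x $ i)"
    using tr cf dt by (elim disjE) (simp_all add: invariants_comp)
qed


definition adjc :: "real^'n^'n \<Rightarrow> real^'n^'n" where
  "adjc X = (\<chi> r k. det (\<chi> i j. if j = r then axis k 1 $ i else X$i$j))"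

lemma inv_formula:
  fixes A :: "real^'n^'n"
  assumes "det A \<noteq> 0"
  shows "matrix_inv A = (1 / det A) *\<^sub>R adjc A"
proof -
  have "(matrix_inv A)$r$k = ((1 / det A) *\<^sub>R adjc A)$r$k" for r k
  proof -
    have "A *v (matrix_inv A *v axis k 1) = axis k 1"
      using inv_lr(1)[OF assms] by (metis matrix_vector_mul_assoc matrix_vector_mul_lid)
    then have "matrix_inv A *v axis k 1 = (\<chi> r. det(\<chi> i j. if j = r then axis k 1 $ i else A$i$j) / det A)"
      using cramer[OF assms] by blast
    then have "(matrix_inv A *v axis k 1) $ r = det(\<chi> i j. if j = r then axis k 1 $ i else A$i$j) / det A"
      by simp
    moreover have "(matrix_inv A *v axis k 1) $ r = (matrix_inv A)$r$k"
      unfolding matrix_vector_mult_def axis_def by (simp add: if_distrib cong: if_cong)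
    ultimately show ?thesis unfolding adjc_def by simp
  qed
  then show ?thesis by (simp add: vec_eq_iff)
qed

lemma poly_adjc: "polynomial_function (adjc :: real^'n^'n \<Rightarrow> real^'n^'n)"
  unfolding adjc_def
  by (intro poly_vec, simp, rule poly_det, simp add: poly_entry_if)

lemma inv_diff:
  fixes Cp :: "real \<Rightarrow> real^'n^'n"
  assumes "\<And>s. det (Cp s) \<noteq> 0" "Cp differentiable (at t)"
  shows "(\<lambda>s. matrix_inv (Cp s)) differentiable (at t)"
proof -
  have eq: "(\<lambda>s. matrix_inv (Cp s)) = (\<lambda>s. inverse (det (Cp s)) *\<^sub>R adjc (Cp s))"
    using inv_formula[OF assms(1)] by (simp add: divide_inverse)
  have d1: "(\<lambda>s. det (Cp s)) differentiable (at t)"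
    using differentiable_chain_at[OF assms(2) differentiable_at_polynomial_function[OF poly_det[OF poly_entry]]]
    by (simp add: o_def)
  have d2: "(\<lambda>s. adjc (Cp s)) differentiable (at t)"
    using differentiable_chain_at[OF assms(2) differentiable_at_polynomial_function[OF poly_adjc]]
    by (simp add: o_def)
  show ?thesis unfolding eq using d1 d2 assms(1) by simp
qed


lemma linear_transpose: "linear (transpose :: real^'n^'m \<Rightarrow> real^'m^'n)"
  by (rule linearI) (simp_all add: transpose_def vec_eq_iff)

lemma bl_transpose: "bounded_linear (transpose :: real^'n^'m \<Rightarrow> real^'m^'n)"
  using linear_transpose linear_conv_bounded_linear by blast

lemma mat_scaleR_left: "((c::real) *\<^sub>R (A::real^'n^'m)) ** B = c *\<^sub>R (A ** B)"
  by (simp add: vec_eq_iff matrix_matrix_mult_def sum_distrib_left algebra_simps)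

lemma mat_scaleR_right: "(A::real^'n^'m) ** ((c::real) *\<^sub>R B) = c *\<^sub>R (A ** B)"
  by (simp add: vec_eq_iff matrix_matrix_mult_def sum_distrib_left algebra_simps)

lemma mat_add_rdistrib: "((A::real^'n^'m) + B) ** C = A ** C + B ** C"
  by (simp add: vec_eq_iff matrix_matrix_mult_def sum.distrib algebra_simps)

lemma bb_mult: "bounded_bilinear (\<lambda>(A::real^'n^'n) (B::real^'n^'n). A ** B)"
proof -
  have "bilinear (\<lambda>(A::real^'n^'n) (B::real^'n^'n). A ** B)"
    unfolding bilinear_def
    by (auto intro!: linearI simp: matrix_add_ldistrib mat_add_rdistrib mat_scaleR_left mat_scaleR_right)
  then show ?thesis using bilinear_conv_bounded_bilinear by blast
qed

lemma bl_sandwich: "bounded_linear (\<lambda>M::real^'n^'n. A ** M ** B)"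
proof -
  have "linear (\<lambda>M::real^'n^'n. A ** M ** B)"
    by (rule linearI) (simp_all add: matrix_add_ldistrib mat_add_rdistrib mat_scaleR_left mat_scaleR_right)
  then show ?thesis using linear_conv_bounded_linear by blast
qed

lemma inner_mat1: "mat 1 \<bullet> (X::real^'n^'n) = trace X"
proof -
  have "mat 1 \<bullet> X = (\<Sum>i\<in>UNIV. \<Sum>j\<in>UNIV. (if i = j then 1 else 0) * X$i$j)"
    unfolding inner_vec_def mat_def by simp
  also have "\<dots> = (\<Sum>i\<in>UNIV. \<Sum>j\<in>UNIV. if j = i then X$i$j else 0)"
    by (intro sum.cong refl) auto
  finally have "mat 1 \<bullet> X = (\<Sum>i\<in>UNIV. \<Sum>j\<in>UNIV. if j = i then X$i$j else 0)" .
  then show ?thesis unfolding trace_def by simp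
qed

lemma open_det_pos: "open {G::real^3^3. det G > 0}"
proof -
  have "continuous_on UNIV (\<lambda>G::real^3^3. det G)"
    by (rule differentiable_imp_continuous_on, rule differentiable_on_polynomial_function,
        rule poly_det, rule poly_entry)
  then show ?thesis using open_Collect_less[of "\<lambda>_. 0" "\<lambda>G::real^3^3. det G"] by simp
qed

theorem mainTheorem12:
  fixes W :: "real^3^3 \<Rightarrow> real" and \<Psi> :: "real^3 \<Rightarrow> real" and \<Psi>' :: "real^3 \<Rightarrow> real^3"
    and F :: "real^3^3" and Cp :: "real \<Rightarrow> real^3^3" and t :: real and lam :: real
  assumes Psi_C1: "\<And>x. (\<forall>i. 0 < x $ i) \<Longrightarrow> (\<Psi> has_derivative (\<lambda>h. \<Psi>' x \<bullet> h)) (at x)"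
    and Psi_C1_cont: "continuous_on {x. \<forall>i. 0 < x $ i} \<Psi>'"
    and W_repr: "\<And>G. det G > 0 \<Longrightarrow> W G = \<Psi> (invariants (transpose G ** G))"
    and W_iso: "\<And>G Q R. det G > 0 \<Longrightarrow> rotation_matrix Q \<Longrightarrow> rotation_matrix R \<Longrightarrow> W (Q ** G ** R) = W G"
    and F_pos: "det F > 0"
    and Cp_psym: "\<And>s. psym (Cp s)"
    and Cp_diff: "\<And>s. Cp differentiable (at s)"
  defines "C \<equiv> transpose F ** F"
    and "Be \<equiv> (F ** matrix_inv (msqrt (Cp t))) ** transpose (F ** matrix_inv (msqrt (Cp t)))"
    and "\<tau> \<equiv> grad W (F ** matrix_inv (msqrt (Cp t))) ** transpose (F ** matrix_inv (msqrt (Cp t)))"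
    and "DCpinv \<equiv> vector_derivative (\<lambda>s. matrix_inv (Cp s)) (at t)"
  shows "((\<lambda>s. Wtilde \<Psi> (C ** matrix_inv (Cp s))) has_real_derivative
            (1/2) * (\<tau> \<bullet> (F ** DCpinv ** transpose F ** matrix_inv Be))) (at t)
    \<and> ((dev3 \<tau> \<noteq> 0 \<and> lam \<ge> 0 \<and>
         DCpinv = (-2 * lam) *\<^sub>R (matrix_inv F ** (((1 / norm (dev3 \<tau>)) *\<^sub>R dev3 \<tau>) ** Be)
                                     ** transpose (matrix_inv F)))
       \<longrightarrow> ((\<lambda>s. Wtilde \<Psi> (C ** matrix_inv (Cp s))) has_real_derivative
               (- lam * norm (dev3 \<tau>))) (at t)
           \<and> - lam * norm (dev3 \<tau>) \<le> 0)"
proof -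
  define P where "P = msqrt (Cp t)"
  have P: "psym P" "P ** P = Cp t" "det P > 0" using msqrt_props[OF Cp_psym] unfolding P_def by auto
  define iP where "iP = matrix_inv P"
  have iP: "P ** iP = mat 1" "iP ** P = mat 1" using inv_lr[of P] P(3) unfolding iP_def by auto
  have symP: "transpose P = P" using P(1) unfolding psym_def by simp
  have symiP: "transpose iP = iP" unfolding iP_def using inv_transpose[of P] P(3) symP by simp
  have detiP: "det iP > 0"
  proof -
    have "det P * det iP = 1" using iP(1) by (metis det_I det_mul)
    then show ?thesis using P(3) by (metis zero_less_mult_pos zero_less_one)
  qed
  define Y where "Y = (\<lambda>s. matrix_inv (Cp s))"
  have detCp: "det (Cp s) \<noteq> 0" for s
  proof -
    have "det (Cp s) = det (msqrt (Cp s)) * det (msqrt (Cp s))"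
      using msqrt_props(2)[OF Cp_psym[of s]] by (metis det_mul)
    then show ?thesis using msqrt_props(3)[OF Cp_psym[of s]] by simp
  qed
  have Yt: "Y t = iP ** iP"
    unfolding Y_def
  proof (rule inv_unique)
    have "Cp t ** (iP ** iP) = P ** (P ** iP) ** iP" using P(2) by (simp add: matrix_mul_assoc)
    also have "\<dots> = mat 1" using iP by simp
    finally show "Cp t ** (iP ** iP) = mat 1" .
  qed
  define Fe where "Fe = F ** iP"
  have detFe: "det Fe > 0" unfolding Fe_def using F_pos detiP by (simp add: det_mul)
  have Be_Fe: "Be = Fe ** transpose Fe" unfolding Be_def Fe_def iP_def P_def ..
  have Be_Y: "Be = F ** Y t ** transpose F"
    unfolding Be_Fe Fe_def Yt by (simp add: matrix_transpose_mul symiP matrix_mul_assoc)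
  have symBe: "transpose Be = Be" unfolding Be_Fe by (simp add: matrix_transpose_mul)
  have psymBe: "psym Be"
    unfolding psym_def
  proof (intro conjI allI impI)
    show "transpose Be = Be" by (rule symBe)
    fix x :: "real^3" assume "x \<noteq> 0"
    have "det (transpose Fe) \<noteq> 0" using detFe by (simp add: det_transpose)
    then have "transpose Fe *v x \<noteq> 0" using \<open>x \<noteq> 0\<close>
      by (metis inv_lr(2) matrix_vector_mul_assoc matrix_vector_mul_lid matrix_vector_mult_0_right)
    moreover have "x \<bullet> (Be *v x) = (transpose Fe *v x) \<bullet> (transpose Fe *v x)"
      using quad_conj[of x Fe "mat 1"] unfolding Be_Fe by simp
    ultimately show "x \<bullet> (Be *v x) > 0" by simp
  qed
  have detBe: "det Be \<noteq> 0" unfolding Be_Fe using detFe by (simp add: det_mul det_transpose)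
  define iB where "iB = matrix_inv Be"
  have iB: "Be ** iB = mat 1" "iB ** Be = mat 1" using inv_lr[OF detBe] unfolding iB_def by auto
  have symiB: "transpose iB = iB" unfolding iB_def using inv_transpose[OF detBe] symBe by simp
  define h where "h = (\<lambda>X. \<Psi> (invariants X))"
  have invd: "invariants differentiable (at Be)"
    by (rule differentiable_at_polynomial_function[OF poly_invariants])
  define I' where "I' = frechet_derivative invariants (at Be)"
  have hI: "(invariants has_derivative I') (at Be)"
    using invd frechet_derivative_works unfolding I'_def by blast
  have hPsi: "(\<Psi> has_derivative (\<lambda>h. \<Psi>' (invariants Be) \<bullet> h)) (at (invariants Be))"
    by (rule Psi_C1) (use invariants_pos[OF psymBe] in blast)
  define L where "L = (\<lambda>K. \<Psi>' (invariants Be) \<bullet> I' K)"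
  have hL: "(h has_derivative L) (at Be)"
    unfolding h_def L_def using has_derivative_compose[OF hI hPsi] .
  have blL: "bounded_linear L" using has_derivative_bounded_linear[OF hL] .
  interpret L: bounded_linear L by (rule blL)
  have hq: "((\<lambda>G. G ** transpose G) has_derivative (\<lambda>H. Fe ** transpose H + H ** transpose Fe)) (at Fe)"
  proof -
    have ht: "(transpose has_derivative transpose) (at Fe)"
      using bounded_linear.has_derivative[OF bl_transpose has_derivative_id] by simp
    show ?thesis using bounded_bilinear.FDERIV[OF bb_mult has_derivative_id ht] by simp
  qed
  define f where "f = (\<lambda>H. L (Fe ** transpose H + H ** transpose Fe))"
  have hWq: "((\<lambda>G. h (G ** transpose G)) has_derivative f) (at Fe)"
    unfolding f_def using has_derivative_compose[OF hq, of h L] hL Be_Fe by simp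
  have hW: "(W has_derivative f) (at Fe)"
  proof (rule has_derivative_transform_within_open[OF hWq open_det_pos])
    show "Fe \<in> {G. det G > 0}" using detFe by simp
    fix G :: "real^3^3" assume "G \<in> {G. det G > 0}"
    then show "h (G ** transpose G) = W G" unfolding h_def using W_repr invariants_comm by simp
  qed
  have linf: "linear f" using has_derivative_bounded_linear[OF hW] bounded_linear.linear by blast
  define g0 where "g0 = adjoint f 1"
  have fg0: "(\<lambda>H. g0 \<bullet> H) = f"
  proof
    fix H show "g0 \<bullet> H = f H" using adjoint_works[OF linf, of H 1] unfolding g0_def
      by (simp add: inner_commute)
  qed
  have "\<exists>G. (W has_derivative (\<lambda>H. G \<bullet> H)) (at Fe)" using hW fg0 by metis
  then have "(W has_derivative (\<lambda>H. grad W Fe \<bullet> H)) (at Fe)"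
    unfolding grad_def by (rule someI_ex)
  then have gradf: "(\<lambda>H. grad W Fe \<bullet> H) = f" using has_derivative_unique hW by blast
  have tau_eq: "\<tau> = grad W Fe ** transpose Fe" unfolding \<tau>_def Fe_def iP_def P_def ..
  have Ydiff: "Y differentiable (at t)" unfolding Y_def by (rule inv_diff[OF detCp Cp_diff])
  have hY: "(Y has_vector_derivative DCpinv) (at t)"
    using Ydiff vector_derivative_works unfolding DCpinv_def Y_def by blast
  have symY: "transpose (Y s) = Y s" for s
    unfolding Y_def using inv_transpose[OF detCp[of s]] Cp_psym[of s] unfolding psym_def by simp
  have "((\<lambda>s. transpose (Y s)) has_vector_derivative transpose DCpinv) (at t)"
    by (rule bounded_linear.has_vector_derivative[OF bl_transpose hY])
  then have symD: "transpose DCpinv = DCpinv" using hY symY vector_derivative_unique_at by simp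
  define K where "K = F ** DCpinv ** transpose F"
  have symK: "transpose K = K" unfolding K_def by (simp add: matrix_transpose_mul symD matrix_mul_assoc)
  have hc: "((\<lambda>s. F ** Y s ** transpose F) has_vector_derivative K) (at t)"
    unfolding K_def by (rule bounded_linear.has_vector_derivative[OF bl_sandwich hY])
  have curve_eq: "Wtilde \<Psi> (C ** matrix_inv (Cp s)) = h (F ** Y s ** transpose F)" for s
  proof -
    have "invariants (C ** Y s) = invariants (transpose F ** (F ** Y s))"
      unfolding C_def by (simp add: matrix_mul_assoc)
    also have "\<dots> = invariants (F ** Y s ** transpose F)" by (rule invariants_comm)
    finally show ?thesis unfolding Wtilde_def h_def Y_def by simp
  qed
  have hcomp: "((\<lambda>s. h (F ** Y s ** transpose F)) has_derivative (\<lambda>x. L (x *\<^sub>R K))) (at t)"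
    using has_derivative_compose[OF hc[unfolded has_vector_derivative_def], of h L] hL Be_Y by simp
  have "(\<lambda>x. L (x *\<^sub>R K)) = (*) (L K)" by (auto simp: L.scaleR mult.commute)
  then have der: "((\<lambda>s. Wtilde \<Psi> (C ** matrix_inv (Cp s))) has_real_derivative L K) (at t)"
    using hcomp unfolding has_field_derivative_def curve_eq by simp
  have ident: "L K = (1/2) * (\<tau> \<bullet> (K ** iB))"
  proof -
    have "\<tau> \<bullet> (K ** iB) = grad W Fe \<bullet> (K ** iB ** Fe)" unfolding tau_eq by (rule inner_mat_move)
    also have "\<dots> = f (K ** iB ** Fe)" using gradf by metis
    also have "\<dots> = L (K + K)"
    proof -
      have "Fe ** transpose (K ** iB ** Fe) = K"
        by (simp add: matrix_transpose_mul symK symiB matrix_mul_assoc Be_Fe[symmetric] iB)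
      moreover have "K ** iB ** Fe ** transpose Fe = K"
        by (simp add: matrix_mul_assoc[symmetric] Be_Fe[symmetric] iB)
      ultimately show ?thesis unfolding f_def by simp
    qed
    also have "\<dots> = 2 * L K" unfolding L.add by simp
    finally show ?thesis by simp
  qed
  have part1: "((\<lambda>s. Wtilde \<Psi> (C ** matrix_inv (Cp s))) has_real_derivative
            (1/2) * (\<tau> \<bullet> (F ** DCpinv ** transpose F ** matrix_inv Be))) (at t)"
    using der ident unfolding K_def iB_def by simp
  show ?thesis
  proof (rule conjI[OF part1], rule impI)
    assume hyp: "dev3 \<tau> \<noteq> 0 \<and> lam \<ge> 0 \<and>
         DCpinv = (-2 * lam) *\<^sub>R (matrix_inv F ** (((1 / norm (dev3 \<tau>)) *\<^sub>R dev3 \<tau>) ** Be)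
                                     ** transpose (matrix_inv F))"
    define N where "N = (1 / norm (dev3 \<tau>)) *\<^sub>R dev3 \<tau>"
    have detF: "det F \<noteq> 0" using F_pos by simp
    have iF: "F ** matrix_inv F = mat 1" using inv_lr[OF detF] by simp
    have tF: "transpose (matrix_inv F) ** transpose F = mat 1"
      using iF by (metis matrix_transpose_mul transpose_mat)
    have "F ** DCpinv ** transpose F ** matrix_inv Be = (-2 * lam) *\<^sub>R N"
    proof -
      have "F ** DCpinv ** transpose F ** matrix_inv Be
          = (-2 * lam) *\<^sub>R ((F ** matrix_inv F) ** N ** (Be ** (transpose (matrix_inv F) ** transpose F) ** iB))"
      proof -
        have D: "DCpinv = (-2 * lam) *\<^sub>R (matrix_inv F ** (N ** Be) ** transpose (matrix_inv F))"
          using hyp unfolding N_def by simp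
        show ?thesis unfolding D mat_scaleR_left mat_scaleR_right iB_def
          by (simp only: matrix_mul_assoc)
      qed
      also have "\<dots> = (-2 * lam) *\<^sub>R N" using iF tF iB by simp
      finally show ?thesis .
    qed
    moreover have "\<tau> \<bullet> N = norm (dev3 \<tau>)"
    proof -
      have "\<tau> = dev3 \<tau> + (trace \<tau> / 3) *\<^sub>R mat 1" unfolding dev3_def by simp
      then have "\<tau> \<bullet> dev3 \<tau> = dev3 \<tau> \<bullet> dev3 \<tau> + (trace \<tau> / 3) * (mat 1 \<bullet> dev3 \<tau>)"
        by (metis inner_add_left inner_scaleR_left)
      moreover have "mat 1 \<bullet> dev3 \<tau> = 0"
        unfolding inner_mat1 dev3_def by (simp add: trace_sub trace_def sum_3 mat_def field_simps)
      ultimately have "\<tau> \<bullet> dev3 \<tau> = (norm (dev3 \<tau>))^2" by (simp add: power2_norm_eq_inner)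
      then show ?thesis unfolding N_def using hyp by (simp add: power2_eq_square)
    qed
    ultimately have val: "(1/2) * (\<tau> \<bullet> (F ** DCpinv ** transpose F ** matrix_inv Be)) = - lam * norm (dev3 \<tau>)"
      by simp
    show "((\<lambda>s. Wtilde \<Psi> (C ** matrix_inv (Cp s))) has_real_derivative (- lam * norm (dev3 \<tau>))) (at t)
           \<and> - lam * norm (dev3 \<tau>) \<le> 0"
      using part1 val hyp by simp
  qed
qed

end
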